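(* Let $n\ge 0$ be an integer. Let $K$ be the complete directed graph (without self-loops) on $2n+1$ vertices, and let $R$ be any graph obtained from $K$ by deleting, for each vertex, an arbitrary set of $n$ of its incoming edges. Then at least one vertex of $R$ has at least $n$ outgoing edges in $R$. *)

theory Defs
  imports Main
begin

text \<open>Complete directed graph without self-loops on vertex set V, as a set of arcs (u,v) meaning u -> v.\<close>
definition complete_digraph :: "'a set \<Rightarrow> ('a \<times> 'a) set" where
  "complete_digraph V = {(u, v). u \<in> V \<and> v \<in> V \<and> u \<noteq> v}"

definition in_arcs :: "('a \<times> 'a) set \<Rightarrow> 'a \<Rightarrow> ('a \<times> 'a) set" where
  "in_arcs E v = {e \<in> E. snd e = v}"

definition out_arcs :: "('a \<times> 'a) set \<Rightarrow> 'a \<Rightarrow> ('a \<times> 'a) set" where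
  "out_arcs E v = {e \<in> E. fst e = v}"

end

theory Submission
  imports Defs
begin

lemma card_by_key:
  assumes "finite V" "R \<subseteq> V \<times> V" and that: "\<forall>e\<in>R. f e \<in> V"
  shows "card R = (\<Sum>v\<in>V. card {e\<in>R. f e = v})"
proof -
  have fR: "finite R" using assms finite_subset by blast
  have "R = (\<Union>v\<in>V. {e\<in>R. f e = v})" using that by blast
  then have "card R = card (\<Union>v\<in>V. {e\<in>R. f e = v})" by simp
  also have "\<dots> = (\<Sum>v\<in>V. card {e\<in>R. f e = v})"
    by (rule card_UN_disjoint) (use assms fR in auto)
  finally show ?thesis .
qed

theorem corollary1:
  fixes V :: "'a set" and R :: "('a \<times> 'a) set" and n :: nat
  assumes "finite V" and "card V = 2 * n + 1"
    and "R \<subseteq> complete_digraph V"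
    and "\<forall>v\<in>V. card (in_arcs (complete_digraph V - R) v) = n"
  shows "\<exists>v\<in>V. card (out_arcs R v) \<ge> n"
proof (rule ccontr)
  assume H: "\<not> ?thesis"
  let ?K = "complete_digraph V"
  have RV: "R \<subseteq> V \<times> V" using assms(3) unfolding complete_digraph_def by auto
  have fK: "finite ?K"
    by (rule finite_subset[of _ "V \<times> V"]) (use assms(1) in \<open>auto simp: complete_digraph_def\<close>)
  have inR: "card (in_arcs R v) = n" if v: "v \<in> V" for v
  proof -
    have "in_arcs ?K v = (\<lambda>u. (u, v)) ` (V - {v})"
      using v unfolding in_arcs_def complete_digraph_def by auto
    then have cK: "card (in_arcs ?K v) = 2 * n"
      using assms(1,2) v by (simp add: card_image inj_on_def)
    have sub: "in_arcs R v \<subseteq> in_arcs ?K v" using assms(3) unfolding in_arcs_def by auto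
    have eq: "in_arcs (?K - R) v = in_arcs ?K v - in_arcs R v" unfolding in_arcs_def by auto
    have fin: "finite (in_arcs ?K v)" using fK unfolding in_arcs_def by auto
    have "card (in_arcs (?K - R) v) = 2 * n - card (in_arcs R v)"
      using eq sub fin cK by (simp add: card_Diff_subset finite_subset)
    moreover have "card (in_arcs R v) \<le> 2 * n" using sub fin cK card_mono by metis
    ultimately show ?thesis using assms(4) v by auto
  qed
  have "card R = (\<Sum>v\<in>V. card {e\<in>R. snd e = v})"
    by (rule card_by_key[OF assms(1) RV]) (use RV in auto)
  also have "\<dots> = (\<Sum>v\<in>V. n)" using inR unfolding in_arcs_def by simp
  finally have c1: "card R = (2 * n + 1) * n" using assms(2) by simp
  have "card R = (\<Sum>v\<in>V. card {e\<in>R. fst e = v})"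
    by (rule card_by_key[OF assms(1) RV]) (use RV in auto)
  also have "\<dots> < (\<Sum>v\<in>V. n)"
  proof (rule sum_strict_mono)
    show "V \<noteq> {}" using assms(2) by auto
  qed (use H assms(1) in \<open>auto simp: out_arcs_def not_le\<close>)
  finally show False using c1 assms(2) by simp
qed

end
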